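(* The set of periodic points of $R$ is dense in $[0,1]$, and for every integer $n\ge1$ the map $R$ has uncountably many periodic points of minimal period $n$.
   Context: Define $\rho$ on binary words: for $b=b_1b_2\dots$, $\rho(b)$ is obtained by deleting every digit $b_n=0$ and replacing every $b_n=1$ by $0$ if $n$ is odd and by $1$ if $n$ is even. For $x\in(0,1]$ let $\beta(x)$ be the unique binary expansion of $x$ with infinitely many $1$'s. Define $R:[0,1]\to[0,1]$ by $R(0)=2/3$ and, for $x\in(0,1]$, $R(x)=\sum_{n\ge1}c_n2^{-n}$ where $c=\rho(\beta(x))$. *)

theory Defs
  imports "HOL-Analysis.Analysis" "HOL-Library.Infinite_Set"
begin

text \<open>Binary words are sequences b :: nat => bool, with b k standing for the digit
  b_{k+1} of the paper (0-based indexing); True means digit 1.\<close>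

text \<open>rho on a binary word with infinitely many ones: the m-th surviving digit (0-based)
  comes from the m-th one of b, at 0-based index k = enumerate {k. b k} m, i.e. paper position
  k+1; it becomes 0 if k+1 is odd and 1 if k+1 is even, i.e. 1 iff k is odd.\<close>
definition rho :: "(nat \<Rightarrow> bool) \<Rightarrow> (nat \<Rightarrow> bool)" where
  "rho b = (\<lambda>m. odd (enumerate {k. b k} m))"

definition bval :: "(nat \<Rightarrow> bool) \<Rightarrow> real" where
  "bval b = (\<Sum>k. (if b k then 1 else 0) / 2 ^ (Suc k))"

definition beta :: "real \<Rightarrow> (nat \<Rightarrow> bool)" where
  "beta x = (THE b. infinite {k. b k} \<and> (\<lambda>k. (if b k then 1 else 0) / 2 ^ (Suc k)) sums x)"

definition R :: "real \<Rightarrow> real" where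
  "R x = (if x = 0 then 2/3 else bval (rho (beta x)))"

definition periodic_point :: "(real \<Rightarrow> real) \<Rightarrow> real \<Rightarrow> bool" where
  "periodic_point f x \<longleftrightarrow> (\<exists>n>0. (f ^^ n) x = x)"

definition minimal_period :: "(real \<Rightarrow> real) \<Rightarrow> nat \<Rightarrow> real \<Rightarrow> bool" where
  "minimal_period f n x \<longleftrightarrow> n > 0 \<and> (f ^^ n) x = x \<and> (\<forall>m. 0 < m \<and> m < n \<longrightarrow> (f ^^ m) x \<noteq> x)"

end

theory Submission
  imports Defs
begin


definition ones :: "bool list \<Rightarrow> nat list" where
  "ones q = filter (\<lambda>i. q ! i) [0..<length q]"

definition rhoL :: "bool list \<Rightarrow> bool list" where
  "rhoL q = map odd (ones q)"

function kk :: "nat \<Rightarrow> (nat \<Rightarrow> bool list) \<Rightarrow> (nat \<Rightarrow> nat \<Rightarrow> nat) \<Rightarrow> nat \<Rightarrow> nat \<Rightarrow> nat" where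
  "kk n Q e j m = (if m < length (ones (Q j)) then ones (Q j) ! m
     else (let base = (if m = length (ones (Q j)) then Suc (length (Q j)) else Suc (kk n Q e j (m - 1)));
              T = (m \<in> set (ones (Q (Suc j mod n))) \<or> (\<exists>i\<in>{..<m}. kk n Q e (Suc j mod n) i = m))
          in base + (if odd base = T then 0 else 1) + 2 * e j m))"
  by pat_completeness auto
termination by (relation "Wellfounded.measure (\<lambda>(n,Q,e,j,m). m)") auto

declare kk.simps[simp del]

lemma ones_set: "i \<in> set (ones q) \<longleftrightarrow> i < length q \<and> q ! i"
  by (auto simp: ones_def)

lemma ones_sorted: "sorted_wrt (<) (ones q)"
  unfolding ones_def by (intro sorted_wrt_filter) (simp add: sorted_wrt_iff_nth_less)

lemma ones_nth_lt: "a < b \<Longrightarrow> b < length (ones q) \<Longrightarrow> ones q ! a < ones q ! b"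
  using ones_sorted sorted_wrt_nth_less by blast

lemma ones_nth_bound: "m < length (ones q) \<Longrightarrow> ones q ! m < length q"
  using nth_mem ones_set by blast

lemma length_ones: "length (ones q) \<le> length q"
  unfolding ones_def by (metis length_filter_le length_upt minus_nat.diff_0)

definition TT where "TT n Q e j m \<longleftrightarrow> (m \<in> set (ones (Q (Suc j mod n))) \<or> (\<exists>i\<in>{..<m}. kk n Q e (Suc j mod n) i = m))"
definition bb where "bb n Q e j m = (if m = length (ones (Q j)) then Suc (length (Q j)) else Suc (kk n Q e j (m - 1)))"

context fixes n :: nat and Q :: "nat \<Rightarrow> bool list" and e :: "nat \<Rightarrow> nat \<Rightarrow> nat"
begin

lemma kk_lt: "m < length (ones (Q j)) \<Longrightarrow> kk n Q e j m = ones (Q j) ! m"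
  by (subst kk.simps) simp

lemma kk_ge: "\<not> m < length (ones (Q j)) \<Longrightarrow> kk n Q e j m =
   bb n Q e j m + (if odd (bb n Q e j m) = TT n Q e j m then 0 else 1) + 2 * e j m"
  by (subst kk.simps) (simp add: Let_def TT_def bb_def)

lemma kk_parity: "\<not> m < length (ones (Q j)) \<Longrightarrow> odd (kk n Q e j m) \<longleftrightarrow> TT n Q e j m"
  by (subst kk_ge) auto

lemma kk_step: "kk n Q e j m < kk n Q e j (Suc m)"
proof (cases "Suc m < length (ones (Q j))")
  case True
  then show ?thesis by (simp add: kk_lt ones_nth_lt)
next
  case False
  show ?thesis
  proof (cases "Suc m = length (ones (Q j))")
    case True
    then have "kk n Q e j m < length (Q j)" by (simp add: kk_lt ones_nth_bound)
    moreover have "bb n Q e j (Suc m) = Suc (length (Q j))" using True by (simp add: bb_def)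
    ultimately show ?thesis using False by (subst (2) kk_ge) auto
  next
    case F2: False
    have "bb n Q e j (Suc m) = Suc (kk n Q e j m)" using F2 by (simp add: bb_def)
    then show ?thesis using False by (subst (2) kk_ge) auto
  qed
qed

lemma kk_smono: "strict_mono (kk n Q e j)"
  by (simp add: kk_step strict_mono_Suc_iff)

lemma kk_free_big: "length (ones (Q j)) \<le> m \<Longrightarrow> Suc (length (Q j)) + (m - length (ones (Q j))) \<le> kk n Q e j m"
proof (induction m)
  case 0
  then have "bb n Q e j 0 = Suc (length (Q j))" by (simp add: bb_def)
  then show ?case using 0 by (subst kk_ge) auto
next
  case (Suc m)
  show ?case
  proof (cases "Suc m = length (ones (Q j))")
    case True
    then have "bb n Q e j (Suc m) = Suc (length (Q j))" by (simp add: bb_def)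
    then show ?thesis using True by (subst kk_ge) auto
  next
    case False
    then have "bb n Q e j (Suc m) = Suc (kk n Q e j m)" by (simp add: bb_def)
    moreover have "Suc (length (Q j)) + (m - length (ones (Q j))) \<le> kk n Q e j m"
      using Suc False by auto
    ultimately show ?thesis using Suc False by (subst kk_ge) auto
  qed
qed

lemma kk_free_gt: "length (ones (Q j)) \<le> m \<Longrightarrow> m < kk n Q e j m \<and> length (Q j) < kk n Q e j m"
  using kk_free_big[of j m] length_ones[of "Q j"] by auto

lemma kk_range: "x \<in> range (kk n Q e j) \<longleftrightarrow> x \<in> set (ones (Q j)) \<or> (\<exists>i<x. kk n Q e j i = x)"
proof
  assume "x \<in> range (kk n Q e j)"
  then obtain i where i: "kk n Q e j i = x" by auto
  show "x \<in> set (ones (Q j)) \<or> (\<exists>i<x. kk n Q e j i = x)"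
  proof (cases "i < length (ones (Q j))")
    case True then show ?thesis using i nth_mem by (auto simp add: kk_lt)
  next
    case False then show ?thesis using i kk_free_gt[of j i] by auto
  qed
next
  assume "x \<in> set (ones (Q j)) \<or> (\<exists>i<x. kk n Q e j i = x)"
  then show "x \<in> range (kk n Q e j)"
    by (metis in_set_conv_nth kk_lt rangeI)
qed

lemma TT_range: "TT n Q e j m \<longleftrightarrow> m \<in> range (kk n Q e (Suc j mod n))"
  by (simp add: TT_def kk_range) blast

lemma parity_all:
  assumes HQ: "ones (Q j) \<noteq> [] \<Longrightarrow> Q (Suc j mod n) = rhoL (Q j)"
  shows "odd (kk n Q e j m) \<longleftrightarrow> m \<in> range (kk n Q e (Suc j mod n))"
proof (cases "m < length (ones (Q j))")
  case False then show ?thesis using kk_parity TT_range by simp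
next
  case True
  then have ne: "ones (Q j) \<noteq> []" by auto
  have Qg: "Q (Suc j mod n) = rhoL (Q j)" using HQ ne by auto
  have lg: "length (Q (Suc j mod n)) = length (ones (Q j))" using Qg by (simp add: rhoL_def)
  have "m \<in> range (kk n Q e (Suc j mod n)) \<longleftrightarrow> m \<in> set (ones (Q (Suc j mod n)))"
  proof
    assume "m \<in> range (kk n Q e (Suc j mod n))"
    then have "m \<in> set (ones (Q (Suc j mod n))) \<or> (\<exists>i<m. kk n Q e (Suc j mod n) i = m)"
      using kk_range by blast
    then show "m \<in> set (ones (Q (Suc j mod n)))"
    proof
      assume "\<exists>i<m. kk n Q e (Suc j mod n) i = m"
      then obtain i where i: "kk n Q e (Suc j mod n) i = m" by auto
      show "m \<in> set (ones (Q (Suc j mod n)))"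
      proof (cases "i < length (ones (Q (Suc j mod n)))")
        case True then show ?thesis using i nth_mem by (auto simp add: kk_lt)
      next
        case False then show ?thesis using i kk_free_gt[of "Suc j mod n" i] lg \<open>m < _\<close> by auto
      qed
    qed
  next
    assume "m \<in> set (ones (Q (Suc j mod n)))"
    then show "m \<in> range (kk n Q e (Suc j mod n))" using kk_range by blast
  qed
  also have "\<dots> \<longleftrightarrow> odd (ones (Q j) ! m)"
    using True by (simp add: Qg ones_set rhoL_def)
  finally show ?thesis using True by (simp add: kk_lt)
qed

lemma prefix_kk:
  assumes il: "i < length (Q j)"
  shows "(i \<in> range (kk n Q e j)) \<longleftrightarrow> Q j ! i"
proof
  assume "i \<in> range (kk n Q e j)"
  then have "i \<in> set (ones (Q j)) \<or> (\<exists>i'<i. kk n Q e j i' = i)" using kk_range by blast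
  then have "i \<in> set (ones (Q j))"
  proof
    assume "\<exists>i'<i. kk n Q e j i' = i"
    then obtain i' where i': "kk n Q e j i' = i" by auto
    show "i \<in> set (ones (Q j))"
    proof (cases "i' < length (ones (Q j))")
      case True then show ?thesis using i' nth_mem by (auto simp add: kk_lt)
    next
      case False then show ?thesis using i' kk_free_gt[of j i'] il by auto
    qed
  qed
  then show "Q j ! i" using ones_set by blast
next
  assume "Q j ! i"
  then have "i \<in> set (ones (Q j))" using il ones_set by blast
  then show "i \<in> range (kk n Q e j)" using kk_range by blast
qed

end

lemma smono_range_eq:
  fixes f g :: "nat \<Rightarrow> nat"
  assumes f: "strict_mono f" and g: "strict_mono g" and r: "range f = range g"
  shows "f = g"
proof -
  have "\<forall>m<k. f m = g m" for k
  proof (induction k)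
    case 0 then show ?case by simp
  next
    case (Suc k)
    have "f k = g k"
    proof (rule ccontr)
      assume ne: "f k \<noteq> g k"
      show False
      proof (cases "f k < g k")
        case True
        obtain m where m: "g m = f k" using r by (metis rangeE rangeI)
        then have "m < k" using True g by (metis strict_mono_less)
        then show False using Suc m f by (metis strict_mono_eq nat_neq_iff)
      next
        case False
        then have lt: "g k < f k" using ne by auto
        obtain m where m: "f m = g k" using r by (metis rangeE rangeI)
        then have "m < k" using lt f by (metis strict_mono_less)
        then show False using Suc m g by (metis strict_mono_eq nat_neq_iff)
      qed
    qed
    then show ?case using Suc by (auto simp: less_Suc_eq)
  qed
  then show ?thesis by auto
qed

lemma enumerate_range_smono:
  fixes f :: "nat \<Rightarrow> nat"
  assumes f: "strict_mono f"
  shows "enumerate (range f) = f"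
proof -
  have inf: "infinite (range f)"
    using f strict_mono_imp_inj_on range_inj_infinite by blast
  show ?thesis
    by (rule smono_range_eq) (use inf f in \<open>auto simp: range_enumerate strict_mono_enumerate\<close>)
qed

definition wd where "wd n Q e j = (\<lambda>i. i \<in> range (kk n Q e j))"

lemma wd_inf: "infinite {i. wd n Q e j i}"
proof -
  have "{i. wd n Q e j i} = range (kk n Q e j)" by (auto simp: wd_def)
  then show ?thesis using range_inj_infinite[OF strict_mono_imp_inj_on[OF kk_smono]] by simp
qed

lemma rho_wd:
  assumes HQ: "ones (Q j) \<noteq> [] \<Longrightarrow> Q (Suc j mod n) = rhoL (Q j)"
  shows "rho (wd n Q e j) = wd n Q e (Suc j mod n)"
  unfolding rho_def wd_def using parity_all[OF HQ]
  by (simp add: enumerate_range_smono kk_smono)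



abbreviation tm :: "(nat \<Rightarrow> bool) \<Rightarrow> nat \<Rightarrow> real" where
  "tm b i \<equiv> (if b i then 1 else 0) / 2 ^ Suc i"

lemma tm_nonneg: "0 \<le> tm b i" by simp

lemma tm_le: "tm b i \<le> (1/2) ^ Suc i"
  by (simp add: power_one_over)

lemma summable_tm: "summable (tm b)"
  by (rule summable_comparison_test'[where g="\<lambda>i. (1/2::real) ^ Suc i"])
     (use power_half_series sums_summable tm_le in auto)

lemma summable_tm_shift: "summable (\<lambda>i. tm b (i + m))"
  using summable_iff_shift[of "tm b" m] summable_tm[of b] by simp

lemma tail_le: "(\<Sum>i. tm b (i + m)) \<le> 1 / 2 ^ m"
proof -
  have s: "(\<lambda>i. (1 / 2 ^ m) * (1/2::real) ^ Suc i) sums ((1 / 2 ^ m) * 1)"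
    by (rule sums_mult[OF power_half_series])
  have "tm b (i + m) \<le> (1 / 2 ^ m) * (1/2::real) ^ Suc i" for i
    by (simp add: power_add power_one_over field_simps)
  then have "(\<Sum>i. tm b (i + m)) \<le> (\<Sum>i. (1 / 2 ^ m) * (1/2::real) ^ Suc i)"
    by (intro suminf_le summable_tm_shift) (use s sums_summable in auto)
  also have "\<dots> = 1 / 2 ^ m" using s sums_unique by force
  finally show ?thesis .
qed

lemma tail_nonneg: "0 \<le> (\<Sum>i. tm b (i + m))"
  by (intro suminf_nonneg summable_tm_shift) simp

lemma bval_split: "bval b = (\<Sum>i. tm b (i + m)) + (\<Sum>i<m. tm b i)"
  unfolding bval_def using suminf_split_initial_segment[OF summable_tm] by simp

lemma bval_range: "0 \<le> bval b \<and> bval b \<le> 1"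
  using bval_split[of b 0] tail_nonneg[of b 0] tail_le[of b 0] by simp

lemma bval_pos: "b k \<Longrightarrow> 0 < bval b"
  unfolding bval_def by (rule suminf_pos2[OF summable_tm, of _ k]) auto

lemma tail_pos: assumes "b (k + m)" shows "0 < (\<Sum>i. tm b (i + m))"
  by (rule suminf_pos2[OF summable_tm_shift, of _ _ k]) (use assms in auto)

lemma bval_gt:
  assumes inf: "infinite {i. b i}" and eq: "\<forall>i<k. b i = c i" and bk: "b k" and ck: "\<not> c k"
  shows "bval c < bval b"
proof -
  have "\<exists>k'>k. b k'" using inf unfolding infinite_nat_iff_unbounded by auto
  then obtain k' where k': "k' > k" "b k'" by blast
  have "b ((k' - Suc k) + Suc k)" using k' by simp
  then obtain d where d: "b (d + Suc k)" by blast
  have sb: "(\<Sum>i<Suc k. tm b i) = (\<Sum>i<k. tm c i) + 1 / 2 ^ Suc k"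
    using eq bk by simp
  have sc: "(\<Sum>i<Suc k. tm c i) = (\<Sum>i<k. tm c i)"
    using ck by simp
  have "bval c \<le> 1 / 2 ^ Suc k + (\<Sum>i<k. tm c i)"
    using bval_split[of c "Suc k"] tail_le[of c "Suc k"] sc by simp
  also have "\<dots> < (\<Sum>i. tm b (i + Suc k)) + (\<Sum>i<Suc k. tm b i)"
    using tail_pos[of b d "Suc k", OF d] sb by simp
  also have "\<dots> = bval b" using bval_split[of b "Suc k"] by simp
  finally show ?thesis .
qed

lemma bval_inj:
  assumes ib: "infinite {i. b i}" and ic: "infinite {i. c i}" and eq: "bval b = bval c"
  shows "b = c"
proof (rule ccontr)
  assume "b \<noteq> c"
  then have ex: "\<exists>i. b i \<noteq> c i" by auto
  define k where "k = (LEAST i. b i \<noteq> c i)"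
  have bk: "b k \<noteq> c k" unfolding k_def by (rule LeastI_ex[OF ex])
  have lt: "\<forall>i<k. b i = c i" unfolding k_def using not_less_Least by blast
  show False
  proof (cases "b k")
    case True
    then show ?thesis using bval_gt[OF ib lt True] bk eq by auto
  next
    case False
    then show ?thesis using bval_gt[OF ic, of k b] lt bk eq by auto
  qed
qed

lemma beta_bval: assumes ib: "infinite {i. b i}" shows "beta (bval b) = b"
  unfolding beta_def
proof (rule the_equality)
  show "infinite {k. b k} \<and> tm b sums bval b"
    using ib summable_tm by (simp add: bval_def summable_sums)
next
  fix c assume "infinite {k. c k} \<and> tm c sums bval b"
  then have ic: "infinite {k. c k}" and s: "tm c sums bval b" by auto
  have "bval c = bval b" using sums_unique[OF s] by (simp add: bval_def)
  then show "c = b" using bval_inj[OF ic ib] by simp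
qed

lemma R_bval: assumes ib: "infinite {i. b i}" shows "R (bval b) = bval (rho b)"
proof -
  have "\<exists>k. b k"
  proof (rule ccontr)
    assume "\<not> (\<exists>k. b k)"
    then have "{i. b i} = {}" by auto
    then show False using ib by simp
  qed
  then obtain k where "b k" by auto
  then have "bval b \<noteq> 0" using bval_pos by force
  then show ?thesis by (simp add: R_def beta_bval[OF ib])
qed

fun sg :: "real \<Rightarrow> nat \<Rightarrow> real" where
  "sg x 0 = 0"
| "sg x (Suc i) = sg x i + (if sg x i + 1/2^Suc i \<le> x then 1/2^Suc i else 0)"

definition dg :: "real \<Rightarrow> nat \<Rightarrow> bool" where "dg x i \<longleftrightarrow> sg x i + 1/2^Suc i \<le> x"

lemma sg_inv: assumes "0 \<le> x" "x \<le> 1" shows "sg x L \<le> x \<and> x \<le> sg x L + 1/2^L"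
proof (induction L)
  case 0 then show ?case using assms by simp
next
  case (Suc L)
  have h: "(1::real)/2^L = 1/2^Suc L + 1/2^Suc L" by simp
  show ?case
  proof (cases "sg x L + 1/2^Suc L \<le> x")
    case True
    then have "sg x (Suc L) = sg x L + 1/2^Suc L" by simp
    then show ?thesis using Suc h True by linarith
  next
    case False
    then have "sg x (Suc L) = sg x L" by simp
    then show ?thesis using Suc h False by linarith
  qed
qed

lemma sg_sum: "sg x L = (\<Sum>i<L. tm (dg x) i)"
proof (induction L)
  case 0 then show ?case by simp
next
  case (Suc L)
  have "tm (dg x) L = (if sg x L + 1/2^Suc L \<le> x then 1/2^Suc L else 0)" by (simp add: dg_def)
  then show ?case using Suc by (simp del: sg.simps add: sg.simps(2))
qed

lemma approx:
  assumes "0 \<le> x" "x \<le> 1" and pre: "\<forall>i<L. b i = dg x i"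
  shows "\<bar>bval b - x\<bar> \<le> 1/2^L"
proof -
  have "(\<Sum>i<L. tm b i) = sg x L" using pre by (simp add: sg_sum)
  then have "bval b = (\<Sum>i. tm b (i + L)) + sg x L" using bval_split[of b L] by simp
  then show ?thesis using sg_inv[OF assms(1,2), of L] tail_le[of b L] tail_nonneg[of b L] by auto
qed



lemma orbit:
  assumes n: "n > 0"
    and HQ: "\<forall>j<n. ones (Q j) \<noteq> [] \<longrightarrow> Q (Suc j mod n) = rhoL (Q j)"
  shows "(R ^^ m) (bval (wd n Q e 0)) = bval (wd n Q e (m mod n))"
proof (induction m)
  case 0 then show ?case by simp
next
  case (Suc m)
  have jl: "m mod n < n" using n by simp
  have "(R ^^ Suc m) (bval (wd n Q e 0)) = R (bval (wd n Q e (m mod n)))" using Suc by simp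
  also have "\<dots> = bval (rho (wd n Q e (m mod n)))" by (rule R_bval[OF wd_inf])
  also have "\<dots> = bval (wd n Q e (Suc (m mod n) mod n))"
    using rho_wd[of Q "m mod n" n e] HQ jl by simp
  also have "Suc (m mod n) mod n = Suc m mod n" by (simp add: mod_Suc_eq)
  finally show ?case .
qed

lemma rhoL_len: "length (rhoL q) = length (ones q)" by (simp add: rhoL_def)

lemma ones_eventually_empty: "\<exists>N. ones ((rhoL ^^ N) q) = []"
proof (induction "length q" arbitrary: q rule: less_induct)
  case less
  show ?case
  proof (cases "ones q = []")
    case True then show ?thesis by (metis funpow_0)
  next
    case ne: False
    show ?thesis
    proof (cases "length (rhoL q) < length q")
      case True
      then obtain N where "ones ((rhoL ^^ N) (rhoL q)) = []" using less by blast
      then show ?thesis by (metis funpow_Suc_right o_apply)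
    next
      case False
      then have eq: "length (ones q) = length q" using rhoL_len length_ones by (metis le_neq_implies_less)
      have allq: "\<forall>i<length q. q ! i"
      proof (rule ccontr)
        assume "\<not> (\<forall>i<length q. q ! i)"
        then obtain i where "i < length q" "\<not> q ! i" by auto
        then have "length (ones q) < length q" unfolding ones_def
          by (metis (mono_tags, lifting) atLeastLessThan_iff diff_zero le0 length_filter_less length_upt set_upt)
        then show False using eq by simp
      qed
      have oq: "ones q = [0..<length q]" unfolding ones_def using allq by (simp add: filter_id_conv)
      have lq: "0 < length q" using ne oq by auto
      define q' where "q' = rhoL q"
      have q'0: "\<not> q' ! 0" "length q' = length q" using lq by (simp_all add: q'_def rhoL_def oq)
      have "length (filter ((!) q') [0..<length q']) < length [0..<length q']"
        by (rule length_filter_less[of 0]) (use q'0 lq in auto)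
      then have "length (ones q') < length q'" unfolding ones_def by simp
      then have "length (rhoL q') < length q" using q'0 rhoL_len by simp
      then obtain N where "ones ((rhoL ^^ N) (rhoL q')) = []" using less by blast
      then have "ones ((rhoL ^^ Suc (Suc N)) q) = []"
        by (simp add: q'_def funpow_Suc_right del: funpow.simps)
      then show ?thesis by blast
    qed
  qed
qed


lemma periodic_near:
  assumes x: "0 \<le> x" "x \<le> 1"
  shows "\<exists>y. 0 \<le> y \<and> y \<le> 1 \<and> periodic_point R y \<and> \<bar>y - x\<bar> \<le> 1/2^L"
proof -
  define p where "p = map (dg x) [0..<L]"
  obtain N where N: "ones ((rhoL ^^ N) p) = []" using ones_eventually_empty by blast
  define n where "n = Suc N"
  define Q where "Q j = (rhoL ^^ j) p" for j
  have HQ: "\<forall>j<n. ones (Q j) \<noteq> [] \<longrightarrow> Q (Suc j mod n) = rhoL (Q j)"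
  proof (intro allI impI)
    fix j assume j: "j < n" and ne: "ones (Q j) \<noteq> []"
    then have "j \<noteq> N" using N Q_def by auto
    then have "j < N" using j n_def by simp
    then have "Suc j mod n = Suc j" using n_def by simp
    then show "Q (Suc j mod n) = rhoL (Q j)" by (simp add: Q_def)
  qed
  define y where "y = bval (wd n Q (\<lambda>_ _. 0) 0)"
  have n0: "n > 0" using n_def by simp
  have "(R ^^ n) y = y" using orbit[OF n0 HQ, where e="\<lambda>_ _. 0" and m=n] by (simp add: y_def)
  then have per: "periodic_point R y" using n0 periodic_point_def by blast
  have pre: "\<forall>i<L. wd n Q (\<lambda>_ _. 0) 0 i = dg x i"
  proof (intro allI impI)
    fix i assume i: "i < L"
    have Q0: "Q 0 = p" by (simp add: Q_def)
    have "wd n Q (\<lambda>_ _. 0) 0 i = (Q 0 ! i)"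
      unfolding wd_def by (rule prefix_kk) (simp add: Q0 p_def i)
    then show "wd n Q (\<lambda>_ _. 0) 0 i = dg x i" using i by (simp add: Q0 p_def)
  qed
  have "\<bar>y - x\<bar> \<le> 1/2^L" unfolding y_def by (rule approx[OF x pre])
  then show ?thesis using per bval_range y_def by blast
qed

lemma density: "closure {x \<in> {0..1}. periodic_point R x} = {0..1::real}"
proof
  show "closure {x \<in> {0..1}. periodic_point R x} \<subseteq> {0..1}"
    by (rule closure_minimal) auto
next
  show "{0..1} \<subseteq> closure {x \<in> {0..1::real}. periodic_point R x}"
  proof
    fix x :: real assume "x \<in> {0..1}"
    then have x: "0 \<le> x" "x \<le> 1" by auto
    show "x \<in> closure {x \<in> {0..1}. periodic_point R x}"
      unfolding closure_approachable
    proof (intro allI impI)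
      fix e :: real assume e: "e > 0"
      obtain L where L: "(1/2::real) ^ L < e" using real_arch_pow_inv[OF e] by force
      obtain y where y: "0 \<le> y" "y \<le> 1" "periodic_point R y" "\<bar>y - x\<bar> \<le> 1/2^L"
        using periodic_near[OF x] by blast
      have "dist y x < e" using y(4) L by (simp add: dist_real_def power_one_over)
      then show "\<exists>y\<in>{x \<in> {0..1}. periodic_point R x}. dist y x < e" using y by auto
    qed
  qed
qed


lemma kk_empty0: "Q j = [] \<Longrightarrow> Q (Suc j mod n) = [] \<Longrightarrow> kk n Q e j 0 = 2 + 2 * e j 0"
proof -
  assume Qj: "Q j = []" and Qg: "Q (Suc j mod n) = []"
  have o: "ones [] = []" by (simp add: ones_def)
  have "bb n Q e j 0 = 1" by (simp add: bb_def Qj o)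
  moreover have "\<not> TT n Q e j 0" by (simp add: TT_def Qg o)
  ultimately show ?thesis using kk_ge[of 0 Q j n e] by (simp add: Qj o)
qed

lemma bbTT_cong:
  assumes "\<forall>m'<m. \<forall>j. kk n Q e j m' = kk n Q e' j m'" and nl: "\<not> m < length (ones (Q j))"
  shows "bb n Q e j m = bb n Q e' j m \<and> (TT n Q e j m \<longleftrightarrow> TT n Q e' j m)"
proof
  show "bb n Q e j m = bb n Q e' j m"
  proof (cases "m = length (ones (Q j))")
    case True then show ?thesis by (simp add: bb_def)
  next
    case False
    show ?thesis
    proof (cases m)
      case 0 then show ?thesis using False nl by simp
    next
      case (Suc m1) then show ?thesis using assms by (simp add: bb_def)
    qed
  qed
  show "TT n Q e j m \<longleftrightarrow> TT n Q e' j m"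
    unfolding TT_def using assms by auto
qed

lemma kk_agree:
  assumes "\<forall>j. \<forall>m'\<le>M. e j m' = e' j m'"
  shows "m \<le> M \<Longrightarrow> kk n Q e j m = kk n Q e' j m"
proof (induction m arbitrary: j rule: less_induct)
  case (less m)
  have h: "\<forall>m'<m. \<forall>j. kk n Q e j m' = kk n Q e' j m'" using less by auto
  show ?case
  proof (cases "m < length (ones (Q j))")
    case True then show ?thesis by (simp add: kk_lt)
  next
    case False
    then show ?thesis using bbTT_cong[OF h False] assms less.prems
      by (simp add: kk_ge[where m=m and Q=Q and j=j and n=n and e=e] kk_ge[where m=m and Q=Q and j=j and n=n and e=e'] False)
  qed
qed

definition es :: "(nat \<Rightarrow> bool) \<Rightarrow> nat \<Rightarrow> nat \<Rightarrow> nat" where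
  "es s j m = (if m = 0 then j else if j = 0 \<and> s (m - 1) then 1 else 0)"

definition xsf :: "nat \<Rightarrow> (nat \<Rightarrow> bool) \<Rightarrow> real" where
  "xsf n s = bval (wd n (\<lambda>_. []) (es s) 0)"

lemma wd_eq_kk: "wd n Q e j = wd n Q e' j' \<Longrightarrow> kk n Q e j = kk n Q e' j'"
proof -
  assume "wd n Q e j = wd n Q e' j'"
  then have "range (kk n Q e j) = range (kk n Q e' j')"
    unfolding wd_def by (metis Collect_mem_eq)
  then show ?thesis using smono_range_eq kk_smono by blast
qed

lemma xs_minimal:
  assumes n: "n > 0"
  shows "minimal_period R n (xsf n s)"
proof -
  let ?Q = "\<lambda>_::nat. [] :: bool list"
  have HQ: "\<forall>j<n. ones (?Q j) \<noteq> [] \<longrightarrow> ?Q (Suc j mod n) = rhoL (?Q j)" by (simp add: ones_def)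
  have orb: "(R ^^ m) (xsf n s) = bval (wd n ?Q (es s) (m mod n))" for m
    unfolding xsf_def by (rule orbit[OF n HQ])
  have "(R ^^ n) (xsf n s) = xsf n s" using orb[of n] by (simp add: xsf_def)
  moreover have "(R ^^ m) (xsf n s) \<noteq> xsf n s" if m: "0 < m" "m < n" for m
  proof
    assume "(R ^^ m) (xsf n s) = xsf n s"
    then have "bval (wd n ?Q (es s) m) = bval (wd n ?Q (es s) 0)"
      using orb[of m] m by (simp add: xsf_def)
    then have "wd n ?Q (es s) m = wd n ?Q (es s) 0" using bval_inj wd_inf by blast
    then have "kk n ?Q (es s) m 0 = kk n ?Q (es s) 0 0" using wd_eq_kk by metis
    then show False using kk_empty0[of ?Q] m by (simp add: es_def)
  qed
  ultimately show ?thesis using n by (simp add: minimal_period_def)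
qed

lemma xs_inj: "inj (xsf n)"
proof
  fix s s' assume eq: "xsf n s = xsf n s'"
  show "s = s'"
  proof (rule ccontr)
    assume "s \<noteq> s'"
    then have ex: "\<exists>i. s i \<noteq> s' i" by auto
    define M where "M = (LEAST i. s i \<noteq> s' i)"
    have sM: "s M \<noteq> s' M" unfolding M_def by (rule LeastI_ex[OF ex])
    have lt: "\<forall>i<M. s i = s' i" unfolding M_def using not_less_Least by blast
    let ?Q = "\<lambda>_::nat. [] :: bool list"
    have ag: "\<forall>j. \<forall>m'\<le>M. es s j m' = es s' j m'"
      using lt by (auto simp: es_def)
    have h: "\<forall>m'<Suc M. \<forall>j. kk n ?Q (es s) j m' = kk n ?Q (es s') j m'"
      using kk_agree[OF ag] by (simp add: less_Suc_eq_le)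
    have o: "ones [] = []" by (simp add: ones_def)
    have nl: "\<not> Suc M < length (ones (?Q 0))" by (simp add: o)
    have "kk n ?Q (es s) 0 (Suc M) \<noteq> kk n ?Q (es s') 0 (Suc M)"
      using bbTT_cong[OF h nl] sM
      by (simp add: kk_ge[where m="Suc M" and Q="?Q" and j=0 and n=n and e="es s"] kk_ge[where m="Suc M" and Q="?Q" and j=0 and n=n and e="es s'"] o es_def)
    moreover have "wd n ?Q (es s) 0 = wd n ?Q (es s') 0"
      using eq bval_inj wd_inf unfolding xsf_def by blast
    then have "kk n ?Q (es s) 0 = kk n ?Q (es s') 0" by (rule wd_eq_kk)
    ultimately show False by simp
  qed
qed

lemma uncountable_bool_seq: "uncountable (UNIV :: (nat \<Rightarrow> bool) set)"
proof
  assume c: "countable (UNIV :: (nat \<Rightarrow> bool) set)"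
  define f where "f = from_nat_into (UNIV :: (nat \<Rightarrow> bool) set)"
  have r: "range f = UNIV" unfolding f_def using c by simp
  obtain k where "f k = (\<lambda>i. \<not> f i i)" using r by (metis UNIV_I imageE)
  then have "f k k = (\<not> f k k)" by metis
  then show False by simp
qed

lemma uncountable_minimal:
  assumes n: "n \<ge> 1"
  shows "uncountable {x \<in> {0..1}. minimal_period R n x}"
proof
  assume c: "countable {x \<in> {0..1}. minimal_period R n x}"
  have "range (xsf n) \<subseteq> {x \<in> {0..1}. minimal_period R n x}"
    using xs_minimal[of n] n bval_range unfolding xsf_def by auto
  then have "countable (range (xsf n))" using c countable_subset by blast
  then have "countable (UNIV :: (nat \<Rightarrow> bool) set)"
    using countable_image_inj_on xs_inj by blast
  then show False using uncountable_bool_seq by simp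
qed

theorem proposition6p4:
  shows "closure {x \<in> {0..1}. periodic_point R x} = {0..1}
     \<and> (\<forall>n::nat. n \<ge> 1 \<longrightarrow> uncountable {x \<in> {0..1}. minimal_period R n x})"
  using density uncountable_minimal by blast

end
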